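(* Let $r\geq 3$ and let $G$ be a connected $(P_4,K_{1,r})$-free graph with at least $3$ vertices. Then $rx_3(G)\leq sdiam_3(G)+r+3$.
   Context: All graphs are finite, simple, undirected. A tree in an edge-colored graph is rainbow if no two of its edges have the same color; an $S$-tree is a tree containing all vertices of $S$. A $3$-rainbow coloring of a connected graph $G$ is an edge-coloring (adjacent edges may share colors) such that every $3$-element vertex set $S$ has a rainbow $S$-tree; $rx_3(G)$ is the minimum number of colors in such a coloring. $sdiam_3(G)$ is the maximum, over all $3$-element $S\subseteq V(G)$, of the minimum number of edges of an $S$-tree. $(P_4,K_{1,r})$-free means no induced subgraph isomorphic to the path $P_4$ on $4$ vertices or to the star $K_{1,r}$. *)

theory Defs
  imports Main
begin

definition simple_graph :: "'a set \<Rightarrow> 'a set set \<Rightarrow> bool" where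
  "simple_graph V E \<longleftrightarrow> finite V \<and> (\<forall>e\<in>E. e \<subseteq> V \<and> card e = 2)"

definition adj :: "'a set set \<Rightarrow> 'a \<Rightarrow> 'a \<Rightarrow> bool" where
  "adj E u v \<longleftrightarrow> {u, v} \<in> E"

definition connected_graph :: "'a set \<Rightarrow> 'a set set \<Rightarrow> bool" where
  "connected_graph V E \<longleftrightarrow> V \<noteq> {} \<and> (\<forall>u\<in>V. \<forall>v\<in>V. (adj E)\<^sup>*\<^sup>* u v)"

definition is_subtree :: "'a set \<Rightarrow> 'a set set \<Rightarrow> 'a set \<Rightarrow> 'a set set \<Rightarrow> bool" where
  "is_subtree V E VT ET \<longleftrightarrow> VT \<subseteq> V \<and> ET \<subseteq> E \<and> (\<forall>e\<in>ET. e \<subseteq> VT) \<and> finite VT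
     \<and> connected_graph VT ET \<and> card ET + 1 = card VT"

definition is_S_tree :: "'a set \<Rightarrow> 'a set set \<Rightarrow> 'a set \<Rightarrow> 'a set \<Rightarrow> 'a set set \<Rightarrow> bool" where
  "is_S_tree V E S VT ET \<longleftrightarrow> is_subtree V E VT ET \<and> S \<subseteq> VT"

definition three_rainbow_coloring :: "'a set \<Rightarrow> 'a set set \<Rightarrow> ('a set \<Rightarrow> nat) \<Rightarrow> nat \<Rightarrow> bool" where
  "three_rainbow_coloring V E c k \<longleftrightarrow> (\<forall>e\<in>E. c e < k) \<and>
     (\<forall>S. S \<subseteq> V \<and> card S = 3 \<longrightarrow> (\<exists>VT ET. is_S_tree V E S VT ET \<and> inj_on c ET))"

definition rx3 :: "'a set \<Rightarrow> 'a set set \<Rightarrow> nat" where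
  "rx3 V E = (LEAST k. \<exists>c. three_rainbow_coloring V E c k)"

definition steiner_dist :: "'a set \<Rightarrow> 'a set set \<Rightarrow> 'a set \<Rightarrow> nat" where
  "steiner_dist V E S = (LEAST m. \<exists>VT ET. is_S_tree V E S VT ET \<and> card ET = m)"

definition sdiam3 :: "'a set \<Rightarrow> 'a set set \<Rightarrow> nat" where
  "sdiam3 V E = Max {steiner_dist V E S | S. S \<subseteq> V \<and> card S = 3}"

definition has_induced_P4 :: "'a set \<Rightarrow> 'a set set \<Rightarrow> bool" where
  "has_induced_P4 V E \<longleftrightarrow> (\<exists>a\<in>V. \<exists>b\<in>V. \<exists>c\<in>V. \<exists>d\<in>V. distinct [a, b, c, d] \<and>
     {a, b} \<in> E \<and> {b, c} \<in> E \<and> {c, d} \<in> E \<and>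
     {a, c} \<notin> E \<and> {a, d} \<notin> E \<and> {b, d} \<notin> E)"

definition has_induced_star :: "'a set \<Rightarrow> 'a set set \<Rightarrow> nat \<Rightarrow> bool" where
  "has_induced_star V E r \<longleftrightarrow> (\<exists>v\<in>V. \<exists>L. L \<subseteq> V - {v} \<and> card L = r \<and>
     (\<forall>x\<in>L. {v, x} \<in> E) \<and> (\<forall>x\<in>L. \<forall>y\<in>L. x \<noteq> y \<longrightarrow> {x, y} \<notin> E))"

end

theory Submission
  imports Defs
begin


definition rr :: "('a \<Rightarrow> 'a \<Rightarrow> bool) \<Rightarrow> 'a set \<Rightarrow> 'a \<Rightarrow> 'a \<Rightarrow> bool" where
  "rr R W x y \<longleftrightarrow> x \<in> W \<and> y \<in> W \<and> R x y"
definition conn :: "('a \<Rightarrow> 'a \<Rightarrow> bool) \<Rightarrow> 'a set \<Rightarrow> bool" where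
  "conn R W \<longleftrightarrow> (\<forall>u\<in>W. \<forall>v\<in>W. (rr R W)\<^sup>*\<^sup>* u v)"
definition compl :: "('a \<Rightarrow> 'a \<Rightarrow> bool) \<Rightarrow> 'a \<Rightarrow> 'a \<Rightarrow> bool" where
  "compl R x y \<longleftrightarrow> x \<noteq> y \<and> \<not> R x y"
definition p4free :: "('a \<Rightarrow> 'a \<Rightarrow> bool) \<Rightarrow> 'a set \<Rightarrow> bool" where
  "p4free R W \<longleftrightarrow> \<not>(\<exists>a\<in>W. \<exists>b\<in>W. \<exists>c\<in>W. \<exists>d\<in>W. distinct [a,b,c,d] \<and> R a b \<and> R b c \<and> R c d
      \<and> \<not> R a c \<and> \<not> R a d \<and> \<not> R b d)"

lemma rr_sym: "symp R \<Longrightarrow> symp (rr R W)"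
  unfolding rr_def symp_def by blast

lemma reach_sym: "symp R \<Longrightarrow> (rr R W)\<^sup>*\<^sup>* u v \<Longrightarrow> (rr R W)\<^sup>*\<^sup>* v u"
  by (rule sympD[OF symp_rtranclp[OF rr_sym]])

lemma reach_closed:
  assumes "(rr R W)\<^sup>*\<^sup>* u v" "u \<in> C" "\<And>x y. x \<in> C \<Longrightarrow> rr R W x y \<Longrightarrow> y \<in> C"
  shows "v \<in> C"
  using assms(1) by (induction rule: rtranclp_induct) (use assms in auto)

lemma reach_in: "(rr R W)\<^sup>*\<^sup>* u v \<Longrightarrow> u \<in> W \<Longrightarrow> v \<in> W"
  by (induction rule: rtranclp_induct) (auto simp: rr_def)

lemma first_step: "(rr R W)\<^sup>*\<^sup>* v u \<Longrightarrow> v \<noteq> u \<Longrightarrow> \<exists>y. rr R W v y"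
  by (erule converse_rtranclpE) auto

lemma edge_on_path:
  "P\<^sup>*\<^sup>* u t \<Longrightarrow> \<not> Q u \<Longrightarrow> Q t \<Longrightarrow> \<exists>q p. P\<^sup>*\<^sup>* u q \<and> P q p \<and> \<not> Q q \<and> Q p"
proof (induction rule: rtranclp_induct)
  case base then show ?case by simp
next
  case (step y z)
  show ?case
  proof (cases "Q y")
    case True then show ?thesis using step by blast
  next
    case False then show ?thesis using step by blast
  qed
qed

lemma split_comp:
  assumes "symp R" "\<not> conn R W" "u \<in> W"
  defines "X \<equiv> {y. (rr R W)\<^sup>*\<^sup>* u y}"
  shows "X \<subseteq> W" "u \<in> X" "W - X \<noteq> {}" "\<forall>x\<in>X. \<forall>y\<in>W-X. \<not> R x y"
proof -
  show XW: "X \<subseteq> W"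
  proof
    fix y assume "y \<in> X"
    then have "(rr R W)\<^sup>*\<^sup>* u y" unfolding X_def by simp
    then show "y \<in> W" using reach_in assms(3) by metis
  qed
  show "u \<in> X" unfolding X_def by simp
  show "W - X \<noteq> {}"
  proof
    assume h: "W - X = {}"
    have "conn R W" unfolding conn_def
    proof (intro ballI)
      fix p q assume "p \<in> W" "q \<in> W"
      then have "p \<in> X" "q \<in> X" using h by auto
      then have 1: "(rr R W)\<^sup>*\<^sup>* u p" and 2: "(rr R W)\<^sup>*\<^sup>* u q" unfolding X_def by auto
      have "(rr R W)\<^sup>*\<^sup>* p u" using reach_sym[OF assms(1) 1] .
      then show "(rr R W)\<^sup>*\<^sup>* p q" using 2 by (rule rtranclp_trans)
    qed
    then show False using assms(2) by simp
  qed
  show "\<forall>x\<in>X. \<forall>y\<in>W-X. \<not> R x y"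
  proof (intro ballI notI)
    fix x y assume x: "x \<in> X" and y: "y \<in> W - X" and xy: "R x y"
    have "x \<in> W" using x XW by auto
    then have e: "rr R W x y" using y xy unfolding rr_def by auto
    have "(rr R W)\<^sup>*\<^sup>* u x" using x unfolding X_def by simp
    from this e have "(rr R W)\<^sup>*\<^sup>* u y" by (rule rtranclp.rtrancl_into_rtrancl)
    then show False using y unfolding X_def by simp
  qed
qed

lemma p4I:
  assumes "a \<in> W" "b \<in> W" "c \<in> W" "d \<in> W" "distinct [a,b,c,d]" "R a b" "R b c" "R c d"
    "\<not> R a c" "\<not> R a d" "\<not> R b d"
  shows "\<not> p4free R W"
  unfolding p4free_def not_not
  apply (rule bexI[where x=a], rule bexI[where x=b], rule bexI[where x=c], rule bexI[where x=d])
  using assms by auto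

lemma p4free_compl:
  assumes sym: "symp R" and p: "p4free R W" shows "p4free (compl R) W"
proof (rule ccontr)
  assume "\<not> p4free (compl R) W"
  then obtain a b c d where h: "a\<in>W" "b\<in>W" "c\<in>W" "d\<in>W" "distinct [a,b,c,d]" "compl R a b"
     "compl R b c" "compl R c d" "\<not> compl R a c" "\<not>compl R a d" "\<not>compl R b d"
    unfolding p4free_def by blast
  have s: "\<And>x y. R x y \<Longrightarrow> R y x" using sym by (meson sympD)
  have "R b d" "R d a" "R a c" "\<not>R b a" "\<not> R b c" "\<not> R d c" using h s unfolding compl_def by auto
  moreover have "distinct [b,d,a,c]" using h(5) by auto
  ultimately have "\<not> p4free R W" using h(1-4) by (intro p4I[of b W d a c]) auto
  then show False using p by simp
qed

lemma compl_compl: "\<forall>x. \<not> R x x \<Longrightarrow> compl (compl R) = R"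
  unfolding compl_def by (intro ext) auto

lemma compl_sym: "symp R \<Longrightarrow> symp (compl R)"
  unfolding compl_def symp_def by blast

lemma p4free_mono: "p4free R W \<Longrightarrow> W' \<subseteq> W \<Longrightarrow> p4free R W'"
  unfolding p4free_def by blast

lemma core:
  assumes sym: "symp S" and irr: "\<forall>x. \<not> S x x" and c1: "conn S W" and c2: "conn (compl S) W"
    and v: "v \<in> W" and nc: "\<not> conn S (W - {v})" and ne: "W - {v} \<noteq> {}"
  shows "\<not> p4free S W"
proof -
  define W' where "W' = W - {v}"
  obtain u0 where u0: "u0 \<in> W'" using ne W'_def by auto
  have u0W: "u0 \<in> W" "v \<noteq> u0" using u0 unfolding W'_def by auto
  have "(rr (compl S) W)\<^sup>*\<^sup>* v u0" using c2 v u0W(1) unfolding conn_def by blast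
  then obtain u where "rr (compl S) W v u" using first_step u0W(2) by metis
  then have u: "u \<in> W'" "\<not> S v u" unfolding rr_def compl_def W'_def by auto
  define X where "X = {y. (rr S W')\<^sup>*\<^sup>* u y}"
  have sp: "X \<subseteq> W'" "u \<in> X" "W' - X \<noteq> {}" "\<forall>x\<in>X. \<forall>y\<in>W'-X. \<not> S x y"
    using split_comp[OF sym nc[folded W'_def] u(1)] unfolding X_def by auto
  define Y where "Y = W' - X"
  have symS: "\<And>x y. S x y \<Longrightarrow> S y x" using sym by (meson sympD)
  have vW': "v \<notin> W'" unfolding W'_def by auto
  have "\<exists>t\<in>X. S v t"
  proof (rule ccontr)
    assume h: "\<not> (\<exists>t\<in>X. S v t)"
    have "(rr S W)\<^sup>*\<^sup>* v u" using c1 v u W'_def unfolding conn_def by auto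
    then have "u \<in> Y \<union> {v}"
    proof (rule reach_closed)
      show "v \<in> Y \<union> {v}" by simp
      fix x y assume "x \<in> Y \<union> {v}" "rr S W x y"
      then show "y \<in> Y \<union> {v}"
      proof (cases "x = v")
        case True
        then have "S v y" "y \<in> W" using \<open>rr S W x y\<close> unfolding rr_def by auto
        moreover have "y \<noteq> v" using irr \<open>S v y\<close> by auto
        ultimately show ?thesis using h unfolding Y_def W'_def by auto
      next
        case False
        then have xY: "x \<in> Y" using \<open>x \<in> Y \<union> {v}\<close> by auto
        have "S x y" "y \<in> W" using \<open>rr S W x y\<close> unfolding rr_def by auto
        have "y \<notin> X"
        proof
          assume "y \<in> X"
          then show False using sp(4) xY symS[OF \<open>S x y\<close>] unfolding Y_def by blast
        qed
        then show ?thesis using \<open>y \<in> W\<close> unfolding Y_def W'_def by auto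
      qed
    qed
    then show False using sp vW' u unfolding Y_def by auto
  qed
  then obtain t where t: "t \<in> X" "S v t" by blast
  have "\<exists>w\<in>Y. S v w"
  proof (rule ccontr)
    assume h: "\<not> (\<exists>w\<in>Y. S v w)"
    obtain y where y: "y \<in> Y" using sp Y_def by auto
    have "(rr S W)\<^sup>*\<^sup>* v y" using c1 v y sp unfolding conn_def Y_def W'_def by auto
    then have "y \<in> X \<union> {v}"
    proof (rule reach_closed)
      show "v \<in> X \<union> {v}" by simp
      fix x z assume "x \<in> X \<union> {v}" "rr S W x z"
      then show "z \<in> X \<union> {v}"
      proof (cases "x = v")
        case True
        then have "S v z" "z \<in> W" using \<open>rr S W x z\<close> unfolding rr_def by auto
        moreover have "z \<noteq> v" using irr \<open>S v z\<close> by auto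
        ultimately show ?thesis using h unfolding Y_def W'_def by auto
      next
        case False
        then have xX: "x \<in> X" using \<open>x \<in> X \<union> {v}\<close> by auto
        have "S x z" "z \<in> W" using \<open>rr S W x z\<close> unfolding rr_def by auto
        have "z \<notin> Y"
        proof
          assume "z \<in> Y"
          then show False using sp(4) xX \<open>S x z\<close> unfolding Y_def by blast
        qed
        then show ?thesis using \<open>z \<in> W\<close> unfolding Y_def W'_def by auto
      qed
    qed
    then show False using y vW' sp unfolding Y_def by auto
  qed
  then obtain w where w: "w \<in> Y" "S v w" by blast
  have "(rr S W')\<^sup>*\<^sup>* u t" using t unfolding X_def by auto
  then obtain q p where qp: "(rr S W')\<^sup>*\<^sup>* u q" "rr S W' q p" "\<not> S v q" "S v p"
    using edge_on_path[of "rr S W'" u t "S v"] u t by blast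
  have qX: "q \<in> X" using qp unfolding X_def by auto
  have pX: "p \<in> X" using qp(1,2) unfolding X_def by (simp add: rtranclp.rtrancl_into_rtrancl)
  have "q \<noteq> p" using qp irr unfolding rr_def by auto
  moreover have "q \<in> W" "p \<in> W" "w \<in> W" using qX pX w sp unfolding Y_def W'_def by auto
  moreover have "q \<noteq> v" "p \<noteq> v" "w \<noteq> v" "q \<noteq> w" "p \<noteq> w" using qX pX w sp vW' unfolding Y_def by auto
  moreover have "S q p" using qp unfolding rr_def by auto
  moreover have "\<not> S q w" "\<not> S p w" using sp qX pX w unfolding Y_def by auto
  ultimately show ?thesis using qp w v symS by (intro p4I[of q W p v w]) auto
qed



lemma step_single:
  assumes "conn S W" "v \<in> W" "W - {v} = {u}" "\<forall>x. \<not> S x x"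
  shows "S v u"
proof -
  have uW: "u \<in> W" "u \<noteq> v" using assms(3) by auto
  have "(rr S W)\<^sup>*\<^sup>* v u" using assms(1,2) uW(1) unfolding conn_def by blast
  then obtain y where y: "rr S W v y" using first_step uW(2) by metis
  then have "y \<in> W" "S v y" unfolding rr_def by auto
  moreover have "y \<noteq> v" using assms(4) \<open>S v y\<close> by auto
  ultimately have "y = u" using assms(3) by blast
  then show ?thesis using \<open>S v y\<close> by simp
qed

lemma seinsche:
  assumes sym: "symp R" and irr: "\<forall>x. \<not> R x x"
  shows "finite W \<Longrightarrow> p4free R W \<Longrightarrow> card W \<ge> 2 \<Longrightarrow> \<not> (conn R W \<and> conn (compl R) W)"
proof (induction "card W" arbitrary: W rule: less_induct)
  case less
  show ?case
  proof
    assume cc: "conn R W \<and> conn (compl R) W"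
    have "W \<noteq> {}" using less.prems(3) by auto
    then obtain v where v: "v \<in> W" by blast
    define W' where "W' = W - {v}"
    have cW': "card W' = card W - 1" using v less.prems(1) by (simp add: W'_def)
    show False
    proof (cases "card W' \<ge> 2")
      case True
      have ih: "\<not> (conn R W' \<and> conn (compl R) W')"
      proof (rule less.hyps)
        show "card W' < card W" using cW' less.prems(3) by simp
        show "finite W'" using less.prems(1) W'_def by simp
        show "p4free R W'" using less.prems(2) p4free_mono W'_def by blast
        show "2 \<le> card W'" using True .
      qed
      have ne: "W - {v} \<noteq> {}"
      proof
        assume h: "W - {v} = {}"
        have "card W' = 0" unfolding W'_def h by simp
        then show False using True by simp
      qed
      show False
      proof (cases "conn R W'")
        case False
        have "\<not> p4free R W" using core[OF sym irr _ _ v _ ne] cc False W'_def by blast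
        then show False using less.prems(2) by simp
      next
        case True
        then have nc: "\<not> conn (compl R) (W - {v})" using ih W'_def by simp
        have irr2: "\<forall>x. \<not> compl R x x" unfolding compl_def by simp
        have "conn (compl (compl R)) W" using cc compl_compl[of R, OF irr] by simp
        then have "\<not> p4free (compl R) W" using core[OF compl_sym[OF sym] irr2 _ _ v nc ne] cc by blast
        then show False using p4free_compl[OF sym less.prems(2)] by simp
      qed
    next
      case False
      then have "card W' = 1" using cW' less.prems(3) by simp
      then obtain u where u: "W' = {u}" by (meson card_1_singletonE)
      have "R v u" using step_single[of R W v u] cc v u irr W'_def by blast
      moreover have "compl R v u" using step_single[of "compl R" W v u] cc v u W'_def
        unfolding compl_def by blast
      ultimately show False unfolding compl_def by simp
    qed
  qed
qed

lemma join_split: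
  assumes sym: "symp R" and irr: "\<forall>x. \<not> R x x" and fin: "finite W" and p: "p4free R W"
    and c: "card W \<ge> 2" and cn: "conn R W"
  shows "\<exists>A B. A \<union> B = W \<and> A \<inter> B = {} \<and> A \<noteq> {} \<and> B \<noteq> {} \<and> (\<forall>x\<in>A. \<forall>y\<in>B. R x y)"
proof -
  have nc: "\<not> conn (compl R) W" using seinsche[OF sym irr fin p c] cn by blast
  have "W \<noteq> {}" using c by auto
  then obtain u where u: "u \<in> W" by blast
  define X where "X = {y. (rr (compl R) W)\<^sup>*\<^sup>* u y}"
  have sp: "X \<subseteq> W" "u \<in> X" "W - X \<noteq> {}" "\<forall>x\<in>X. \<forall>y\<in>W-X. \<not> compl R x y"
    using split_comp[OF compl_sym[OF sym] nc u] unfolding X_def by auto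
  have "\<forall>x\<in>X. \<forall>y\<in>W-X. R x y"
  proof (intro ballI)
    fix x y assume "x \<in> X" "y \<in> W - X"
    then have "x \<noteq> y" "\<not> compl R x y" using sp by auto
    then show "R x y" unfolding compl_def by simp
  qed
  then show ?thesis using sp by (intro exI[of _ X] exI[of _ "W - X"]) auto
qed



definition cover :: "('a \<Rightarrow> 'a \<Rightarrow> bool) \<Rightarrow> 'a set \<Rightarrow> ('a \<Rightarrow> nat) \<Rightarrow> nat \<Rightarrow> (nat \<Rightarrow> 'a) \<Rightarrow> bool" where
  "cover R W idx k t \<longleftrightarrow> (\<forall>x\<in>W. idx x < k) \<and> (\<forall>x\<in>W. \<forall>y\<in>W. x \<noteq> y \<longrightarrow> idx x = idx y \<longrightarrow> R x y)
     \<and> (\<forall>i<k. t i \<in> W \<and> idx (t i) = i) \<and> (\<forall>i<k. \<forall>j<k. i \<noteq> j \<longrightarrow> \<not> R (t i) (t j))"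

lemma cover_empty: "cover R {} (\<lambda>_. 0) 0 t"
  unfolding cover_def by auto

lemma cover_single: "cover R {w} (\<lambda>_. 0) 1 (\<lambda>_. w)"
  unfolding cover_def by auto

lemma cover_union:
  assumes d: "X \<inter> Y = {}" and ne: "\<forall>x\<in>X. \<forall>y\<in>Y. \<not> R x y \<and> \<not> R y x"
    and cx: "cover R X iX kX tX" and cy: "cover R Y iY kY tY"
  shows "cover R (X \<union> Y) (\<lambda>x. if x \<in> X then iX x else kX + iY x) (kX + kY)
           (\<lambda>i. if i < kX then tX i else tY (i - kX))"
  unfolding cover_def
proof (intro conjI)
  show "\<forall>x\<in>X \<union> Y. (if x \<in> X then iX x else kX + iY x) < kX + kY"
    using cx cy unfolding cover_def by auto
  show "\<forall>x\<in>X \<union> Y. \<forall>y\<in>X \<union> Y. x \<noteq> y \<longrightarrow> (if x \<in> X then iX x else kX + iY x) = (if y \<in> X then iX y else kX + iY y) \<longrightarrow> R x y"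
  proof (intro ballI impI)
    fix x y assume xy: "x \<in> X \<union> Y" "y \<in> X \<union> Y" "x \<noteq> y"
      and eq: "(if x \<in> X then iX x else kX + iY x) = (if y \<in> X then iX y else kX + iY y)"
    have bx: "\<forall>x\<in>X. iX x < kX" using cx unfolding cover_def by auto
    show "R x y"
    proof (cases "x \<in> X")
      case True
      show ?thesis
      proof (cases "y \<in> X")
        case True
        then show ?thesis using \<open>x \<in> X\<close> eq xy cx unfolding cover_def by auto
      next
        case False
        then show ?thesis using \<open>x \<in> X\<close> eq bx by fastforce
      qed
    next
      case False
      show ?thesis
      proof (cases "y \<in> X")
        case True
        then show ?thesis using \<open>x \<notin> X\<close> eq bx by fastforce
      next
        case False
        then show ?thesis using \<open>x \<notin> X\<close> eq xy cy unfolding cover_def by auto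
      qed
    qed
  qed
  show "\<forall>i<kX + kY. (if i < kX then tX i else tY (i - kX)) \<in> X \<union> Y \<and>
        (if (if i < kX then tX i else tY (i - kX)) \<in> X then iX (if i < kX then tX i else tY (i - kX))
         else kX + iY (if i < kX then tX i else tY (i - kX))) = i"
  proof (intro allI impI)
    fix i assume i: "i < kX + kY"
    show "(if i < kX then tX i else tY (i - kX)) \<in> X \<union> Y \<and>
        (if (if i < kX then tX i else tY (i - kX)) \<in> X then iX (if i < kX then tX i else tY (i - kX))
         else kX + iY (if i < kX then tX i else tY (i - kX))) = i"
    proof (cases "i < kX")
      case True
      then show ?thesis using cx unfolding cover_def by auto
    next
      case False
      then have "i - kX < kY" using i by simp
      then have "tY (i - kX) \<in> Y" "iY (tY (i - kX)) = i - kX" using cy unfolding cover_def by auto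
      then show ?thesis using False d by auto
    qed
  qed
  show "\<forall>i<kX + kY. \<forall>j<kX + kY. i \<noteq> j \<longrightarrow> \<not> R (if i < kX then tX i else tY (i - kX)) (if j < kX then tX j else tY (j - kX))"
  proof (intro allI impI)
    fix i j assume ij: "i < kX + kY" "j < kX + kY" "i \<noteq> j"
    have tx: "\<And>i. i < kX \<Longrightarrow> tX i \<in> X" using cx unfolding cover_def by auto
    have ty: "\<And>i. i < kY \<Longrightarrow> tY i \<in> Y" using cy unfolding cover_def by auto
    show "\<not> R (if i < kX then tX i else tY (i - kX)) (if j < kX then tX j else tY (j - kX))"
    proof (cases "i < kX"; cases "j < kX")
      assume "i < kX" "j < kX" then show ?thesis using cx ij unfolding cover_def by auto
    next
      assume "i < kX" "\<not> j < kX" then show ?thesis using tx ty ne ij by auto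
    next
      assume "\<not> i < kX" "j < kX" then show ?thesis using tx ty ne ij by auto
    next
      assume a: "\<not> i < kX" "\<not> j < kX"
      then have "i - kX < kY" "j - kX < kY" "i - kX \<noteq> j - kX" using ij by auto
      then show ?thesis using cy a unfolding cover_def by auto
    qed
  qed
qed

lemma cover_join:
  assumes d: "A \<inter> B = {}" and al: "\<forall>x\<in>A. \<forall>y\<in>B. R x y \<and> R y x"
    and ca: "cover R A iA kA tA" and cb: "cover R B iB kB tB" and le: "kB \<le> kA"
  shows "cover R (A \<union> B) (\<lambda>x. if x \<in> A then iA x else iB x) kA tA"
proof -
  have a1: "\<forall>x\<in>A. iA x < kA" and a2: "\<forall>x\<in>A. \<forall>y\<in>A. x \<noteq> y \<longrightarrow> iA x = iA y \<longrightarrow> R x y"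
    and a3: "\<forall>i<kA. tA i \<in> A \<and> iA (tA i) = i" and a4: "\<forall>i<kA. \<forall>j<kA. i \<noteq> j \<longrightarrow> \<not> R (tA i) (tA j)"
    using ca unfolding cover_def by blast+
  have b1: "\<forall>x\<in>B. iB x < kB" and b2: "\<forall>x\<in>B. \<forall>y\<in>B. x \<noteq> y \<longrightarrow> iB x = iB y \<longrightarrow> R x y"
    using cb unfolding cover_def by blast+
  show ?thesis unfolding cover_def
  proof (intro conjI ballI allI impI)
    fix x assume "x \<in> A \<union> B"
    then show "(if x \<in> A then iA x else iB x) < kA" using a1 b1 le
      by (cases "x \<in> A") auto
  next
    fix x y assume xy: "x \<in> A \<union> B" "y \<in> A \<union> B" "x \<noteq> y"
      and eq: "(if x \<in> A then iA x else iB x) = (if y \<in> A then iA y else iB y)"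
    show "R x y"
    proof (cases "x \<in> A")
      case True
      show ?thesis
      proof (cases "y \<in> A")
        case True
        then show ?thesis using \<open>x \<in> A\<close> eq xy(3) a2 by simp
      next
        case False
        then have "y \<in> B" using xy by simp
        then show ?thesis using \<open>x \<in> A\<close> al by simp
      qed
    next
      case False
      then have xB: "x \<in> B" using xy by simp
      show ?thesis
      proof (cases "y \<in> A")
        case True
        then show ?thesis using xB al by simp
      next
        case False
        then have "y \<in> B" using xy by simp
        then show ?thesis using xB \<open>x \<notin> A\<close> False eq xy(3) b2 by simp
      qed
    qed
  next
    fix i assume "i < kA"
    then show "tA i \<in> A \<union> B" "(if tA i \<in> A then iA (tA i) else iB (tA i)) = i" using a3 by auto
  next
    fix i j assume "i < kA" "j < kA" "i \<noteq> j"
    then show "\<not> R (tA i) (tA j)" using a4 by simp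
  qed
qed

lemma clique_cover:
  assumes sym: "symp R" and irr: "\<forall>x. \<not> R x x"
  shows "finite W \<Longrightarrow> p4free R W \<Longrightarrow> \<exists>idx k t. cover R W idx k t"
proof (induction "card W" arbitrary: W rule: less_induct)
  case less
  have symD: "\<And>x y. R x y \<Longrightarrow> R y x" using sym by (meson sympD)
  show ?case
  proof (cases "card W \<le> 1")
    case True
    then have "W = {} \<or> (\<exists>w. W = {w})" using less.prems(1)
      by (metis One_nat_def card_1_singletonE card_0_eq le_Suc_eq le_zero_eq)
    then show ?thesis using cover_empty cover_single by metis
  next
    case False
    then have c2: "card W \<ge> 2" by simp
    show ?thesis
    proof (cases "conn R W")
      case True
      obtain A B where AB: "A \<union> B = W" "A \<inter> B = {}" "A \<noteq> {}" "B \<noteq> {}" "\<forall>x\<in>A. \<forall>y\<in>B. R x y"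
        using join_split[OF sym irr less.prems(1,2) c2 True] by blast
      have fA: "finite A" "finite B" using AB(1) less.prems(1) by auto
      have "A \<subset> W" using AB by blast
      then have "card A < card W" using less.prems(1) by (rule psubset_card_mono[rotated])
      have "B \<subset> W" using AB by blast
      then have "card B < card W" using less.prems(1) by (rule psubset_card_mono[rotated])
      have pA: "p4free R A" "p4free R B" using less.prems(2) p4free_mono AB(1) by blast+
      obtain iA kA tA where ca: "cover R A iA kA tA"
        using less.hyps[OF \<open>card A < card W\<close> fA(1) pA(1)] by blast
      obtain iB kB tB where cb: "cover R B iB kB tB"
        using less.hyps[OF \<open>card B < card W\<close> fA(2) pA(2)] by blast
      have al: "\<forall>x\<in>A. \<forall>y\<in>B. R x y \<and> R y x" using AB(5) symD by blast
      have al2: "\<forall>x\<in>B. \<forall>y\<in>A. R x y \<and> R y x" using AB(5) symD by blast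
      show ?thesis
      proof (cases "kB \<le> kA")
        case True
        then show ?thesis using cover_join[OF AB(2) al ca cb] AB(1) by blast
      next
        case False
        have "cover R (B \<union> A) (\<lambda>x. if x \<in> B then iB x else iA x) kB tB"
          using cover_join[OF _ al2 cb ca] AB(2) False by (simp add: inf_commute)
        then show ?thesis using AB(1) by (metis sup_commute)
      qed
    next
      case False
      have "W \<noteq> {}" using c2 by auto
      then obtain u where u: "u \<in> W" by blast
      define X where "X = {y. (rr R W)\<^sup>*\<^sup>* u y}"
      have sp: "X \<subseteq> W" "u \<in> X" "W - X \<noteq> {}" "\<forall>x\<in>X. \<forall>y\<in>W-X. \<not> R x y"
        using split_comp[OF sym False u] unfolding X_def by auto
      have fX: "finite X" "finite (W - X)" using finite_subset[OF sp(1) less.prems(1)] less.prems(1) by auto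
      have "X \<subset> W" using sp by blast
      then have c1: "card X < card W" using less.prems(1) by (rule psubset_card_mono[rotated])
      have "W - X \<subset> W" using sp by blast
      then have c2: "card (W - X) < card W" using less.prems(1) by (rule psubset_card_mono[rotated])
      have pX: "p4free R X" "p4free R (W - X)" using less.prems(2) p4free_mono sp(1) by blast+
      obtain iX kX tX where cx: "cover R X iX kX tX"
        using less.hyps[OF c1 fX(1) pX(1)] by blast
      obtain iY kY tY where cy: "cover R (W - X) iY kY tY"
        using less.hyps[OF c2 fX(2) pX(2)] by blast
      have ne: "\<forall>x\<in>X. \<forall>y\<in>W - X. \<not> R x y \<and> \<not> R y x" using sp(4) symD by blast
      have dj: "X \<inter> (W - X) = {}" by auto
      note cu = cover_union[OF dj ne cx cy]
      have eq: "X \<union> (W - X) = W" using sp(1) by auto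
      show ?thesis using cu unfolding eq by blast
    qed
  qed
qed



locale cset =
  fixes V :: "'a set" and E :: "'a set set" and A B :: "'a set" and a b :: 'a
    and idx :: "'a \<Rightarrow> nat" and k r :: nat and t :: "nat \<Rightarrow> 'a"
  assumes sg: "simple_graph V E"
    and AB: "A \<union> B = V" "A \<inter> B = {}" and aA: "a \<in> A" and bB: "b \<in> B"
    and join: "\<forall>x\<in>A. \<forall>y\<in>B. {x,y} \<in> E"
    and cov: "cover (\<lambda>x y. {x,y} \<in> E) (V - {a,b}) idx k t"
    and kr: "k + 1 \<le> r"
begin

definition U where "U = V - {a,b}"
definition d where "d x = (if x \<in> A then b else a)"
definition rep0 where "rep0 i = (SOME x. x \<in> U \<and> idx x = i)"
definition rep1 where "rep1 i = (SOME x. x \<in> U \<and> idx x = i \<and> x \<noteq> rep0 i)"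
definition role where "role x = (if rep0 (idx x) = x then 0 else if rep1 (idx x) = x then 1 else (2::nat))"
definition icol :: "nat set \<Rightarrow> nat" where
  "icol Q = (if 0 \<in> Q \<and> 1 \<in> Q then r+3 else if 0 \<in> Q then r else if 1 \<in> Q then r+2 else r+1)"
definition col where
  "col e = (if e = {a,b} then r - 1
     else if (\<exists>x\<in>U. e = {x, d x}) then idx (SOME x. x \<in> U \<and> e = {x, d x})
     else if (\<exists>x\<in>U. \<exists>y\<in>U. x \<noteq> y \<and> idx x = idx y \<and> e = {x,y}) then icol (role ` e)
     else 0)"

lemma ab: "a \<noteq> b" "a \<in> V" "b \<in> V" using AB aA bB by auto

lemma Uv: "x \<in> U \<Longrightarrow> x \<in> V \<and> x \<noteq> a \<and> x \<noteq> b" unfolding U_def by auto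

lemma abE: "{a,b} \<in> E" using join aA bB by auto

lemma dE: "x \<in> U \<Longrightarrow> {x, d x} \<in> E"
proof -
  assume x: "x \<in> U"
  show ?thesis
  proof (cases "x \<in> A")
    case True then show ?thesis using join bB unfolding d_def by auto
  next
    case False
    then have "x \<in> B" using x AB unfolding U_def by auto
    then have "{a,x} \<in> E" using join aA by auto
    then show ?thesis using False unfolding d_def by (simp add: insert_commute)
  qed
qed

lemma d_ab: "d x = a \<or> d x = b" unfolding d_def by auto

lemma cliq: "x \<in> U \<Longrightarrow> y \<in> U \<Longrightarrow> x \<noteq> y \<Longrightarrow> idx x = idx y \<Longrightarrow> {x,y} \<in> E"
  using cov unfolding cover_def U_def by blast

lemma idx_lt: "x \<in> U \<Longrightarrow> idx x < k"
  using cov unfolding cover_def U_def by blast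

lemma col_ab: "col {a,b} = r - 1" unfolding col_def by simp

lemma col_d: assumes x: "x \<in> U" shows "col {x, d x} = idx x"
proof -
  have ne: "{x, d x} \<noteq> {a,b}"
  proof
    assume "{x, d x} = {a,b}"
    then have "x \<in> {a,b}" by blast
    then show False using Uv[OF x] by auto
  qed
  have ex: "\<exists>x'\<in>U. {x, d x} = {x', d x'}" using x by blast
  have "(SOME x'. x' \<in> U \<and> {x, d x} = {x', d x'}) = x"
  proof (rule some_equality)
    show "x \<in> U \<and> {x, d x} = {x, d x}" using x by simp
    fix x' assume h: "x' \<in> U \<and> {x, d x} = {x', d x'}"
    then have "x' \<in> {x, d x}" by auto
    moreover have "x' \<noteq> d x" using h Uv[of x'] d_ab[of x] by auto
    ultimately show "x' = x" by auto
  qed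
  then show ?thesis unfolding col_def if_not_P[OF ne] if_P[OF ex] by simp
qed

lemma col_in:
  assumes x: "x \<in> U" and y: "y \<in> U" and xy: "x \<noteq> y" and i: "idx x = idx y"
  shows "col {x, y} = icol {role x, role y}"
proof -
  have ne: "{x, y} \<noteq> {a,b}"
  proof
    assume "{x, y} = {a,b}"
    then have "x \<in> {a,b}" by blast
    then show False using Uv[OF x] by auto
  qed
  have nd: "\<not> (\<exists>x'\<in>U. {x, y} = {x', d x'})"
  proof
    assume "\<exists>x'\<in>U. {x, y} = {x', d x'}"
    then obtain x' where "x' \<in> U" "{x, y} = {x', d x'}" by blast
    then have "d x' \<in> {x,y}" by auto
    then show False using Uv[OF x] Uv[OF y] d_ab[of x'] by auto
  qed
  have ex: "\<exists>x'\<in>U. \<exists>y'\<in>U. x' \<noteq> y' \<and> idx x' = idx y' \<and> {x,y} = {x',y'}" using x y xy i by blast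
  show ?thesis unfolding col_def if_not_P[OF ne] if_not_P[OF nd] if_P[OF ex] by simp
qed

lemma icol_ge: "icol Q \<ge> r" "icol Q \<le> r + 3" unfolding icol_def by auto

lemma col_bound: "col e < r + 4"
proof -
  have kr1: "k \<le> r - 1" "r \<ge> 1" using kr by auto
  show ?thesis
  proof (cases "e = {a,b}")
    case True then show ?thesis using kr1 by (simp add: col_ab)
  next
    case False
    show ?thesis
    proof (cases "\<exists>x\<in>U. e = {x, d x}")
      case True
      then have "\<exists>x. x \<in> U \<and> e = {x, d x}" by blast
      from someI_ex[OF this] have "(SOME x. x \<in> U \<and> e = {x, d x}) \<in> U" by blast
      then have "idx (SOME x. x \<in> U \<and> e = {x, d x}) < k" by (rule idx_lt)
      moreover have "col e = idx (SOME x. x \<in> U \<and> e = {x, d x})"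
        unfolding col_def if_not_P[OF False] if_P[OF True] ..
      ultimately show ?thesis using kr1 by simp
    next
      case F2: False
      have "col e = (if (\<exists>x\<in>U. \<exists>y\<in>U. x \<noteq> y \<and> idx x = idx y \<and> e = {x,y}) then icol (role ` e) else 0)"
        unfolding col_def if_not_P[OF False] if_not_P[OF F2] ..
      then show ?thesis using icol_ge[of "role ` e"] by simp
    qed
  qed
qed

lemma rep0_prop: "x \<in> U \<Longrightarrow> rep0 (idx x) \<in> U \<and> idx (rep0 (idx x)) = idx x"
  unfolding rep0_def by (rule someI[of "\<lambda>y. y \<in> U \<and> idx y = idx x" x]) simp

lemma rep1_prop: "x \<in> U \<Longrightarrow> x \<noteq> rep0 (idx x) \<Longrightarrow>
   rep1 (idx x) \<in> U \<and> idx (rep1 (idx x)) = idx x \<and> rep1 (idx x) \<noteq> rep0 (idx x)"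
  unfolding rep1_def by (rule someI[of "\<lambda>y. y \<in> U \<and> idx y = idx x \<and> y \<noteq> rep0 (idx x)" x]) simp

lemma role_le: "role x \<le> 2" unfolding role_def by auto

lemma role0_iff: "role x = 0 \<longleftrightarrow> rep0 (idx x) = x"
  unfolding role_def by (simp split: if_split)

lemma role1_iff: "role x = 1 \<longleftrightarrow> rep0 (idx x) \<noteq> x \<and> rep1 (idx x) = x"
  unfolding role_def by (simp split: if_split)

lemma role2_iff: "role x = 2 \<longleftrightarrow> rep0 (idx x) \<noteq> x \<and> rep1 (idx x) \<noteq> x"
  unfolding role_def by (simp split: if_split)

lemma role0_uniq: "idx x = idx y \<Longrightarrow> role x = 0 \<Longrightarrow> role y = 0 \<Longrightarrow> x = y"
  unfolding role0_iff by metis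

lemma role1_uniq: "idx x = idx y \<Longrightarrow> role x = 1 \<Longrightarrow> role y = 1 \<Longrightarrow> x = y"
  unfolding role1_iff by metis

lemma role2:
  assumes x: "x \<in> U" and r2: "role x = 2"
  shows "rep0 (idx x) \<in> U" "idx (rep0 (idx x)) = idx x" "role (rep0 (idx x)) = 0"
        "rep1 (idx x) \<in> U" "idx (rep1 (idx x)) = idx x" "role (rep1 (idx x)) = 1"
        "x \<noteq> rep0 (idx x)" "x \<noteq> rep1 (idx x)"
proof -
  have n0: "x \<noteq> rep0 (idx x)" and n1: "x \<noteq> rep1 (idx x)" using r2 unfolding role2_iff by auto
  note p0 = rep0_prop[OF x] and p1 = rep1_prop[OF x n0]
  show "rep0 (idx x) \<in> U" "idx (rep0 (idx x)) = idx x" using p0 by auto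
  show "role (rep0 (idx x)) = 0" using p0 unfolding role0_iff by simp
  show "rep1 (idx x) \<in> U" "idx (rep1 (idx x)) = idx x" using p1 by auto
  show "role (rep1 (idx x)) = 1" using p1 unfolding role1_iff by (metis)
  show "x \<noteq> rep0 (idx x)" "x \<noteq> rep1 (idx x)" using n0 n1 .
qed

end


context cset begin

definition rt where "rt VT ET \<longleftrightarrow> is_subtree V E VT ET \<and> inj_on col ET"

lemma rt_single: "v \<in> V \<Longrightarrow> rt {v} {}"
  unfolding rt_def is_subtree_def connected_graph_def by auto

lemma rt_leaf:
  assumes T: "rt VT ET" and v: "v \<in> V" "v \<notin> VT" and w: "w \<in> VT" and e: "{v,w} \<in> E"
    and c: "col {v,w} \<notin> col ` ET"
  shows "rt (insert v VT) (insert {v,w} ET)"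
proof -
  have st: "VT \<subseteq> V" "ET \<subseteq> E" "\<forall>e\<in>ET. e \<subseteq> VT" "finite VT" "connected_graph VT ET"
      "card ET + 1 = card VT" and inj: "inj_on col ET"
    using T unfolding rt_def is_subtree_def by auto
  have nin: "{v,w} \<notin> ET" using st(3) v(2) by blast
  have "ET \<subseteq> Pow VT" using st(3) by blast
  then have fin: "finite ET" using st(4) finite_subset by blast
  have conn: "\<forall>u\<in>VT. \<forall>u'\<in>VT. (adj ET)\<^sup>*\<^sup>* u u'" using st(5) unfolding connected_graph_def by blast
  define ET' where "ET' = insert {v,w} ET"
  have mono: "(adj ET)\<^sup>*\<^sup>* u u' \<Longrightarrow> (adj ET')\<^sup>*\<^sup>* u u'" for u u'
  proof -
    assume "(adj ET)\<^sup>*\<^sup>* u u'"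
    moreover have "adj ET \<le> adj ET'" unfolding adj_def ET'_def by auto
    ultimately show ?thesis using rtranclp_mono by blast
  qed
  have vw: "adj ET' v w" "adj ET' w v" unfolding adj_def ET'_def by (auto simp: insert_commute)
  have cg: "connected_graph (insert v VT) ET'"
    unfolding connected_graph_def
  proof (intro conjI ballI)
    show "insert v VT \<noteq> {}" by simp
    fix x y assume x: "x \<in> insert v VT" and y: "y \<in> insert v VT"
    have xw: "(adj ET')\<^sup>*\<^sup>* x w"
    proof (cases "x = v")
      case True then show ?thesis using vw(1) by auto
    next
      case False then show ?thesis using x conn w mono by auto
    qed
    have wy: "(adj ET')\<^sup>*\<^sup>* w y"
    proof (cases "y = v")
      case True then show ?thesis using vw(2) by auto
    next
      case False then show ?thesis using y conn w mono by auto
    qed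
    show "(adj ET')\<^sup>*\<^sup>* x y" using xw wy by (rule rtranclp_trans)
  qed
  have "card ET' = card ET + 1" unfolding ET'_def using nin fin by simp
  moreover have "card (insert v VT) = card VT + 1" using v(2) st(4) by simp
  moreover have "inj_on col ET'" unfolding ET'_def using inj c nin by simp
  moreover have "\<forall>e\<in>ET'. e \<subseteq> insert v VT" using st(3) w unfolding ET'_def by auto
  moreover have "ET' \<subseteq> E" using st(2) e unfolding ET'_def by auto
  ultimately show ?thesis using st v cg unfolding rt_def is_subtree_def ET'_def by auto
qed

end


context cset begin

definition good where "good S \<longleftrightarrow> (\<exists>VT ET. rt VT ET \<and> S \<subseteq> VT)"

lemma col_ba: "col {b,a} = r - 1" using col_ab by (simp add: insert_commute)

lemma kr1: "k \<le> r - 1" "1 \<le> r" using kr by auto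

lemma base: "rt {b,a} {{b,a}}"
proof -
  have "rt (insert b {a}) (insert {b,a} {})"
    by (rule rt_leaf[OF rt_single[OF ab(2)] ab(3)]) (use ab abE in \<open>auto simp: insert_commute\<close>)
  then show ?thesis by simp
qed

lemma attach:
  assumes "rt VT ET" "a \<in> VT" "b \<in> VT" "x \<in> U" "x \<notin> VT" "idx x \<notin> col ` ET"
  shows "rt (insert x VT) (insert {x, d x} ET)"
proof (rule rt_leaf[OF assms(1)])
  show "x \<in> V" using Uv assms(4) by auto
  show "x \<notin> VT" by fact
  show "d x \<in> VT" using d_ab[of x] assms(2,3) by auto
  show "{x, d x} \<in> E" using dE assms(4) by auto
  show "col {x, d x} \<notin> col ` ET" using col_d[OF assms(4)] assms(6) by simp
qed

lemma inleaf:
  assumes "rt VT ET" "y \<in> VT" "x \<in> U" "y \<in> U" "x \<noteq> y" "idx x = idx y" "x \<notin> VT"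
    "icol {role x, role y} \<notin> col ` ET"
  shows "rt (insert x VT) (insert {x, y} ET)"
proof (rule rt_leaf[OF assms(1)])
  show "x \<in> V" using Uv assms(3) by auto
  show "x \<notin> VT" by fact
  show "y \<in> VT" by fact
  show "{x, y} \<in> E" using cliq assms by auto
  show "col {x, y} \<notin> col ` ET" using col_in[OF assms(3-6)] assms(8) by simp
qed

lemma T1:
  assumes x: "x \<in> U"
  shows "rt (insert x {b,a}) {{x, d x}, {b,a}}"
proof -
  have "idx x < k" using idx_lt x by auto
  then have "idx x \<notin> col ` {{b,a}}" using kr1 col_ba by auto
  moreover have "x \<notin> {b,a}" using Uv x by auto
  ultimately show ?thesis using attach[OF base _ _ x] by auto
qed

lemma G1v: "x \<in> V \<Longrightarrow> good {a,b,x}"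
proof -
  assume x: "x \<in> V"
  show ?thesis
  proof (cases "x \<in> U")
    case True then show ?thesis using T1 unfolding good_def by blast
  next
    case False
    then have "x \<in> {a,b}" using x unfolding U_def by auto
    then show ?thesis using base unfolding good_def by blast
  qed
qed

lemma G2:
  assumes x: "x \<in> U" and y: "y \<in> U" and xy: "x \<noteq> y"
  shows "good {a,b,x,y}"
proof -
  have ix: "idx x < k" "idx y < k" using idx_lt x y by auto
  have ny: "y \<notin> insert x {b,a}" using Uv y xy by auto
  have cs: "col ` {{x, d x}, {b,a}} = {idx x, r - 1}" using col_d[OF x] col_ba by simp
  show ?thesis
  proof (cases "idx x = idx y")
    case False
    have "idx y \<notin> col ` {{x, d x}, {b,a}}" using cs False ix kr1 by auto
    then have "rt (insert y (insert x {b,a})) (insert {y, d y} {{x, d x}, {b,a}})"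
      using attach[OF T1[OF x] _ _ y ny] by auto
    then show ?thesis unfolding good_def by blast
  next
    case True
    have "icol {role y, role x} \<notin> col ` {{x, d x}, {b,a}}" using cs ix kr1 icol_ge[of "{role y, role x}"] by auto
    then have "rt (insert y (insert x {b,a})) (insert {y, x} {{x, d x}, {b,a}})"
      using inleaf[OF T1[OF x] _ y x _ _ ny] True xy by auto
    then show ?thesis unfolding good_def by blast
  qed
qed

lemma G2v:
  assumes x: "x \<in> V" and y: "y \<in> V"
  shows "good {a,b,x,y}"
proof (cases "x \<in> U")
  case True
  show ?thesis
  proof (cases "y \<in> U")
    case True
    show ?thesis
    proof (cases "x = y")
      case True then show ?thesis using G1v x by simp
    next
      case False then show ?thesis using G2 \<open>x \<in> U\<close> \<open>y \<in> U\<close> by blast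
    qed
  next
    case False
    then have "y \<in> {a,b}" using y unfolding U_def by auto
    then have "{a,b,x,y} = {a,b,x}" by auto
    then show ?thesis using G1v x by simp
  qed
next
  case False
  then have "x \<in> {a,b}" using x unfolding U_def by auto
  then have "{a,b,x,y} = {a,b,y}" by auto
  then show ?thesis using G1v y by simp
qed

lemma G3diff:
  assumes x: "x \<in> U" and y: "y \<in> U" and z: "z \<in> U"
    and i: "idx x \<noteq> idx y" "idx x \<noteq> idx z" "idx y \<noteq> idx z"
  shows "good {x,y,z}"
proof -
  have ix: "idx x < k" "idx y < k" "idx z < k" using idx_lt x y z by auto
  have d: "x \<noteq> y" "x \<noteq> z" "y \<noteq> z" using i by auto
  have ny: "y \<notin> insert x {b,a}" using Uv y d by auto
  have cs: "col ` {{x, d x}, {b,a}} = {idx x, r - 1}" using col_d[OF x] col_ba by simp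
  have "idx y \<notin> col ` {{x, d x}, {b,a}}" using cs i ix kr1 by auto
  then have T2: "rt (insert y (insert x {b,a})) (insert {y, d y} {{x, d x}, {b,a}})"
    using attach[OF T1[OF x] _ _ y ny] by auto
  have nz: "z \<notin> insert y (insert x {b,a})" using Uv z d by auto
  have "col ` (insert {y, d y} {{x, d x}, {b,a}}) = {idx y, idx x, r - 1}"
    using col_d[OF x] col_d[OF y] col_ba by simp
  then have "idx z \<notin> col ` (insert {y, d y} {{x, d x}, {b,a}})" using i ix kr1 by auto
  then have "rt (insert z (insert y (insert x {b,a}))) (insert {z, d z} (insert {y, d y} {{x, d x}, {b,a}}))"
    using attach[OF T2 _ _ z nz] by auto
  then show ?thesis unfolding good_def by blast
qed

lemma G3pair:
  assumes x: "x \<in> U" and y: "y \<in> U" and z: "z \<in> U" and xy: "x \<noteq> y"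
    and i: "idx x = idx y" "idx x \<noteq> idx z"
  shows "good {x,y,z}"
proof -
  have ix: "idx x < k" "idx y < k" "idx z < k" using idx_lt x y z by auto
  have d: "x \<noteq> z" "y \<noteq> z" using i by auto
  have ny: "y \<notin> insert x {b,a}" using Uv y xy by auto
  have cs: "col ` {{x, d x}, {b,a}} = {idx x, r - 1}" using col_d[OF x] col_ba by simp
  have "icol {role y, role x} \<notin> col ` {{x, d x}, {b,a}}" using cs ix kr1 icol_ge[of "{role y, role x}"] by auto
  then have T2: "rt (insert y (insert x {b,a})) (insert {y, x} {{x, d x}, {b,a}})"
    using inleaf[OF T1[OF x] _ y x _ _ ny] i xy by auto
  have nz: "z \<notin> insert y (insert x {b,a})" using Uv z d by auto
  have "col ` (insert {y, x} {{x, d x}, {b,a}}) = {icol {role y, role x}, idx x, r - 1}"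
    using col_d[OF x] col_in[OF y x] xy i col_ba by simp
  then have "idx z \<notin> col ` (insert {y, x} {{x, d x}, {b,a}})" using i ix kr1 icol_ge[of "{role y, role x}"] by auto
  then have "rt (insert z (insert y (insert x {b,a}))) (insert {z, d z} (insert {y, x} {{x, d x}, {b,a}}))"
    using attach[OF T2 _ _ z nz] by auto
  then show ?thesis unfolding good_def by blast
qed

end


context cset begin

lemma path3:
  assumes x: "x \<in> U" and y: "y \<in> U" and z: "z \<in> U" and d: "x \<noteq> y" "x \<noteq> z" "y \<noteq> z"
    and i: "idx x = idx y" "idx y = idx z"
    and c: "icol {role y, role x} \<noteq> icol {role z, role y}"
  shows "good {x,y,z}"
proof -
  have T1: "rt (insert y {x}) (insert {y,x} {})"
    by (rule inleaf[OF rt_single]) (use x y d i Uv in auto)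
  have "col {y,x} = icol {role y, role x}" using col_in[OF y x] d i by simp
  then have "rt (insert z (insert y {x})) (insert {z,y} (insert {y,x} {}))"
    by (intro inleaf[OF T1]) (use x y z d i c in auto)
  then show ?thesis unfolding good_def by blast
qed

lemma internal_sorted:
  assumes x: "x \<in> U" and y: "y \<in> U" and z: "z \<in> U" and d: "x \<noteq> y" "x \<noteq> z" "y \<noteq> z"
    and i: "idx x = idx y" "idx y = idx z"
    and o: "role x \<le> role y" "role y \<le> role z"
  shows "good {x,y,z}"
proof -
  have rz: "role z \<le> 2" by (rule role_le)
  have n00: "\<not> (role x = 0 \<and> role y = 0)" using role0_uniq[OF i(1)] d(1) by blast
  have n11: "\<not> (role x = 1 \<and> role y = 1)" using role1_uniq[OF i(1)] d(1) by blast
  have n11': "\<not> (role y = 1 \<and> role z = 1)" using role1_uniq[OF i(2)] d(3) by blast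
  have n00': "\<not> (role y = 0 \<and> role z = 0)" using role0_uniq[OF i(2)] d(3) by blast
  have r3: "role v = 0 \<or> role v = 1 \<or> role v = 2" for v unfolding role_def by (simp split: if_split)
  consider "role x = 0" "role y = 2" "role z = 2" | "role x = 1" "role y = 2" "role z = 2"
    | "role x = 0" "role y = 1" "role z = 2" | "role x = 2" "role y = 2" "role z = 2"
    using r3[of x] r3[of y] r3[of z] o n00 n11 n11' n00' by auto
  then show ?thesis
  proof cases
    case 1 then show ?thesis using path3[OF x y z d i] unfolding icol_def by simp
  next
    case 2 then show ?thesis using path3[OF x y z d i] unfolding icol_def by simp
  next
    case 3 then show ?thesis using path3[OF x y z d i] unfolding icol_def by simp
  next
    case 4
    define v0 where "v0 = rep0 (idx x)"
    define v1 where "v1 = rep1 (idx x)"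
    note rx = role2[OF x 4(1), folded v0_def v1_def]
    have v: "v0 \<in> U" "idx v0 = idx x" "role v0 = 0" "v1 \<in> U" "idx v1 = idx x" "role v1 = 1"
      using rx by auto
    have dist: "v0 \<noteq> x" "v1 \<noteq> x" "v0 \<noteq> y" "v1 \<noteq> y" "v0 \<noteq> z" "v1 \<noteq> z" "v0 \<noteq> v1"
      using v 4 by auto
    have T1: "rt (insert v0 {x}) (insert {v0,x} {})"
      by (rule inleaf[OF rt_single]) (use x v dist Uv in auto)
    have c1: "col {v0,x} = r" using col_in[OF v(1) x] dist v 4 unfolding icol_def by simp
    have T2: "rt (insert v1 (insert v0 {x})) (insert {v1,v0} (insert {v0,x} {}))"
      by (rule inleaf[OF T1]) (use v dist c1 in \<open>auto simp: icol_def\<close>)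
    have c2: "col {v1,v0} = r + 3" using col_in[OF v(4) v(1)] dist v unfolding icol_def by simp
    have T3: "rt (insert y (insert v1 (insert v0 {x}))) (insert {y,v1} (insert {v1,v0} (insert {v0,x} {})))"
      by (rule inleaf[OF T2]) (use v y i dist d c1 c2 4 in \<open>auto simp: icol_def\<close>)
    have c3: "col {y,v1} = r + 2" using col_in[OF y v(4)] dist v i 4 unfolding icol_def by simp
    have "rt (insert z (insert y (insert v1 (insert v0 {x}))))
            (insert {z,y} (insert {y,v1} (insert {v1,v0} (insert {v0,x} {}))))"
      by (rule inleaf[OF T3]) (use v y z i dist d c1 c2 c3 4 in \<open>auto simp: icol_def\<close>)
    then show ?thesis unfolding good_def by blast
  qed
qed

lemma internal:
  assumes x: "x \<in> U" and y: "y \<in> U" and z: "z \<in> U" and d: "x \<noteq> y" "x \<noteq> z" "y \<noteq> z"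
    and i: "idx x = idx y" "idx y = idx z"
  shows "good {x,y,z}"
proof -
  have e1: "{x,y,z} = {y,x,z}" "{x,y,z} = {x,z,y}" "{x,y,z} = {z,x,y}" "{x,y,z} = {y,z,x}" "{x,y,z} = {z,y,x}"
    by auto
  consider "role x \<le> role y" "role y \<le> role z" | "role y \<le> role x" "role x \<le> role z"
    | "role x \<le> role z" "role z \<le> role y" | "role z \<le> role x" "role x \<le> role y"
    | "role y \<le> role z" "role z \<le> role x" | "role z \<le> role y" "role y \<le> role x" by linarith
  then show ?thesis
  proof cases
    case 1 then show ?thesis using internal_sorted[OF x y z d i] by blast
  next
    case 2 show ?thesis unfolding e1(1) by (rule internal_sorted[OF y x z]) (use d i 2 in auto)
  next
    case 3 show ?thesis unfolding e1(2) by (rule internal_sorted[OF x z y]) (use d i 3 in auto)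
  next
    case 4 show ?thesis unfolding e1(3) by (rule internal_sorted[OF z x y]) (use d i 4 in auto)
  next
    case 5 show ?thesis unfolding e1(4) by (rule internal_sorted[OF y z x]) (use d i 5 in auto)
  next
    case 6 show ?thesis unfolding e1(5) by (rule internal_sorted[OF z y x]) (use d i 6 in auto)
  qed
qed

end


context cset begin

lemma good_mono: "good T \<Longrightarrow> S \<subseteq> T \<Longrightarrow> good S"
  unfolding good_def by blast

lemma triple: assumes S: "S \<subseteq> V" "card S = 3" shows "good S"
proof -
  obtain x y z where xyz: "S = {x,y,z}" "x \<noteq> y" "y \<noteq> z" "x \<noteq> z"
    using S(2) unfolding card_3_iff by blast
  have V: "x \<in> V" "y \<in> V" "z \<in> V" using S(1) unfolding xyz(1) by auto
  show ?thesis unfolding xyz(1)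
  proof (cases "x \<in> {a,b}")
    case True
    show "good {x,y,z}" by (rule good_mono[OF G2v[OF V(2,3)]]) (use True in auto)
  next
    case nx: False
    show "good {x,y,z}"
    proof (cases "y \<in> {a,b}")
      case True
      show ?thesis by (rule good_mono[OF G2v[OF V(1,3)]]) (use True in auto)
    next
      case ny: False
      show ?thesis
      proof (cases "z \<in> {a,b}")
        case True
        show ?thesis by (rule good_mono[OF G2v[OF V(1,2)]]) (use True in auto)
      next
        case nz: False
        have U: "x \<in> U" "y \<in> U" "z \<in> U" using nx ny nz V unfolding U_def by auto
        show ?thesis
        proof (cases "idx x = idx y")
          case T1: True
          show ?thesis
          proof (cases "idx y = idx z")
            case True
            show ?thesis by (rule internal[OF U xyz(2,4,3) T1 True])
          next
            case False
            show ?thesis by (rule G3pair[OF U xyz(2) T1]) (use T1 False in simp)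
          qed
        next
          case False
          show ?thesis
          proof (cases "idx x = idx z")
            case True
            have "good {x,z,y}" by (rule G3pair[OF U(1,3,2) xyz(4) True]) (use True False in simp)
            moreover have "{x,z,y} = {x,y,z}" by auto
            ultimately show ?thesis by simp
          next
            case F2: False
            show ?thesis
            proof (cases "idx y = idx z")
              case True
              have "good {y,z,x}" by (rule G3pair[OF U(2,3,1) xyz(3) True]) (use True False in simp)
              moreover have "{y,z,x} = {x,y,z}" by auto
              ultimately show ?thesis by simp
            next
              case F3: False
              show ?thesis by (rule G3diff[OF U False F2 F3])
            qed
          qed
        qed
      qed
    qed
  qed
qed

lemma coloring: "three_rainbow_coloring V E col (r + 4)"
  unfolding three_rainbow_coloring_def
proof (intro conjI ballI allI impI)
  fix e show "col e < r + 4" by (rule col_bound)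
next
  fix S assume "S \<subseteq> V \<and> card S = 3"
  then have "good S" using triple by blast
  then show "\<exists>VT ET. is_S_tree V E S VT ET \<and> inj_on col ET"
    unfolding good_def rt_def is_S_tree_def by blast
qed

end

lemma star_from:
  assumes v: "v \<in> V" and ti: "\<forall>i<r. t i \<in> V - {v}" and e: "\<forall>i<r. {v, t i} \<in> E"
    and ind: "\<forall>i<r. \<forall>j<r. i \<noteq> j \<longrightarrow> {t i, t j} \<notin> E" and inj: "inj_on t {..<r}"
  shows "has_induced_star V E r"
  unfolding has_induced_star_def
proof (intro bexI[OF _ v] exI[of _ "t ` {..<r}"] conjI)
  show "t ` {..<r} \<subseteq> V - {v}" using ti by auto
  show "card (t ` {..<r}) = r" using inj by (simp add: card_image)
  show "\<forall>x\<in>t ` {..<r}. {v, x} \<in> E" using e by auto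
  show "\<forall>x\<in>t ` {..<r}. \<forall>y\<in>t ` {..<r}. x \<noteq> y \<longrightarrow> {x, y} \<notin> E" using ind by auto
qed

theorem theorem7:
  fixes V :: "'a set" and E :: "'a set set" and r :: nat
  assumes "r \<ge> 3"
    and "simple_graph V E"
    and "connected_graph V E"
    and "card V \<ge> 3"
    and "\<not> has_induced_P4 V E"
    and "\<not> has_induced_star V E r"
  shows "rx3 V E \<le> sdiam3 V E + r + 3"
proof -
  define R where "R = (\<lambda>x y. {x,y} \<in> E)"
  have Esub: "\<And>e. e \<in> E \<Longrightarrow> e \<subseteq> V \<and> card e = 2" using assms(2) unfolding simple_graph_def by blast
  have finV: "finite V" using assms(2) unfolding simple_graph_def by blast
  have symR: "symp R" unfolding R_def symp_def by (simp add: insert_commute)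
  have irr: "\<forall>x. \<not> R x x" unfolding R_def using Esub by fastforce
  have p4: "p4free R V" using assms(5) unfolding p4free_def has_induced_P4_def R_def .
  have rrE: "rr R V = adj E"
  proof (intro ext)
    fix x y show "rr R V x y = adj E x y" unfolding rr_def R_def adj_def using Esub by blast
  qed
  have conn: "conn R V" using assms(3) unfolding conn_def connected_graph_def rrE by blast
  have c2: "card V \<ge> 2" using assms(4) by simp
  obtain A B where AB: "A \<union> B = V" "A \<inter> B = {}" "A \<noteq> {}" "B \<noteq> {}" "\<forall>x\<in>A. \<forall>y\<in>B. R x y"
    using join_split[OF symR irr finV p4 c2 conn] by blast
  obtain a b where ab: "a \<in> A" "b \<in> B" using AB by blast
  have fU: "finite (V - {a,b})" using finV by simp
  have pU: "p4free R (V - {a,b})" using p4 p4free_mono by blast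
  obtain idx k t where cv: "cover R (V - {a,b}) idx k t"
    using clique_cover[OF symR irr fU pU] by blast
  have cvd: "\<forall>i<k. t i \<in> V - {a,b} \<and> idx (t i) = i" "\<forall>i<k. \<forall>j<k. i \<noteq> j \<longrightarrow> \<not> R (t i) (t j)"
    using cv unfolding cover_def by auto
  have kr: "k + 1 \<le> r"
  proof (rule ccontr)
    assume "\<not> k + 1 \<le> r"
    then have rk: "r \<le> k" by simp
    have tV: "\<forall>i<r. t i \<in> V - {a,b}" using cvd rk by auto
    have ind: "\<forall>i<r. \<forall>j<r. i \<noteq> j \<longrightarrow> {t i, t j} \<notin> E" using cvd(2) rk unfolding R_def by auto
    have inj: "inj_on t {..<r}"
    proof (rule inj_onI)
      fix i j assume "i \<in> {..<r}" "j \<in> {..<r}" "t i = t j"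
      then show "i = j" using cvd(1) rk by (metis lessThan_iff order_less_le_trans)
    qed
    have r0: "0 < r" using assms(1) by simp
    show False
    proof (cases "t 0 \<in> A")
      case True
      have allA: "\<forall>i<r. t i \<in> A"
      proof (intro allI impI)
        fix i assume i: "i < r"
        show "t i \<in> A"
        proof (rule ccontr)
          assume "t i \<notin> A"
          then have "t i \<in> B" using tV i AB(1) by auto
          then have "R (t 0) (t i)" using AB(5) True by blast
          moreover have "i \<noteq> 0"
          proof
            assume "i = 0" then show False using \<open>t i \<notin> A\<close> True by simp
          qed
          ultimately show False using ind i r0 unfolding R_def by blast
        qed
      qed
      have "has_induced_star V E r"
      proof (rule star_from[of b])
        show "b \<in> V" using ab AB by auto
        show "\<forall>i<r. t i \<in> V - {b}" using tV by auto
        show "\<forall>i<r. {b, t i} \<in> E"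
        proof (intro allI impI)
          fix i assume "i < r"
          then have "{t i, b} \<in> E" using allA AB(5) ab unfolding R_def by blast
          then show "{b, t i} \<in> E" by (simp add: insert_commute)
        qed
      qed (use ind inj in auto)
      then show False using assms(6) by simp
    next
      case False
      then have t0B: "t 0 \<in> B" using tV r0 AB(1) by auto
      have allB: "\<forall>i<r. t i \<in> B"
      proof (intro allI impI)
        fix i assume i: "i < r"
        show "t i \<in> B"
        proof (rule ccontr)
          assume "t i \<notin> B"
          then have "t i \<in> A" using tV i AB(1) by auto
          then have "R (t i) (t 0)" using AB(5) t0B by blast
          moreover have "i \<noteq> 0"
          proof
            assume "i = 0" then show False using \<open>t i \<notin> B\<close> t0B by simp
          qed
          ultimately show False using ind i r0 unfolding R_def by blast
        qed
      qed
      have "has_induced_star V E r"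
      proof (rule star_from[of a])
        show "a \<in> V" using ab AB by auto
        show "\<forall>i<r. t i \<in> V - {a}" using tV by auto
        show "\<forall>i<r. {a, t i} \<in> E" using allB AB(5) ab unfolding R_def by auto
      qed (use ind inj in auto)
      then show False using assms(6) by simp
    qed
  qed
  interpret cs: cset V E A B a b idx k r t
  proof
    show "simple_graph V E" by fact
    show "A \<union> B = V" "A \<inter> B = {}" "a \<in> A" "b \<in> B" using AB ab by auto
    show "\<forall>x\<in>A. \<forall>y\<in>B. {x, y} \<in> E" using AB(5) unfolding R_def .
    show "cover (\<lambda>x y. {x, y} \<in> E) (V - {a, b}) idx k t" using cv unfolding R_def .
    show "k + 1 \<le> r" by fact
  qed
  have col: "three_rainbow_coloring V E cs.col (r + 4)" by (rule cs.coloring)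
  have rx: "rx3 V E \<le> r + 4" unfolding rx3_def by (rule Least_le) (use col in blast)
  obtain S0 where S0: "S0 \<subseteq> V" "card S0 = 3" using obtain_subset_with_card_n assms(4) by metis
  define P where "P = (\<lambda>m. \<exists>VT ET. is_S_tree V E S0 VT ET \<and> card ET = m)"
  have "\<exists>VT ET. is_S_tree V E S0 VT ET \<and> inj_on cs.col ET" using col S0 unfolding three_rainbow_coloring_def by blast
  then have "\<exists>m. P m" unfolding P_def by blast
  from LeastI_ex[OF this] obtain VT ET where T: "is_S_tree V E S0 VT ET" "card ET = (LEAST m. P m)"
    unfolding P_def by blast
  have "card S0 \<le> card VT" using T(1) unfolding is_S_tree_def is_subtree_def by (meson card_mono)
  then have "card ET \<ge> 2" using T(1) S0 unfolding is_S_tree_def is_subtree_def by simp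
  then have sd0: "steiner_dist V E S0 \<ge> 2" using T(2) unfolding steiner_dist_def P_def by simp
  have fin: "finite {steiner_dist V E S | S. S \<subseteq> V \<and> card S = 3}"
  proof -
    have "finite {S. S \<subseteq> V \<and> card S = 3}" using finV by simp
    then show ?thesis by (rule finite_image_set)
  qed
  have "steiner_dist V E S0 \<in> {steiner_dist V E S | S. S \<subseteq> V \<and> card S = 3}" using S0 by blast
  then have "steiner_dist V E S0 \<le> sdiam3 V E" unfolding sdiam3_def using fin by (rule Max_ge[rotated])
  then show ?thesis using rx sd0 by simp
qed

end
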